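(* With $h$ as defined in the context, $h$ is smooth (infinitely differentiable) on $(-2,\infty)$.
   Context: Let $u_n=(-1)^{s_2(n)}$, where $s_2(n)$ is the sum of the binary digits of the non-negative integer $n$ (Thue–Morse sequence with values $\pm1$). For real $x>-2$ define $h(x)=\prod_{n=1}^\infty\left(\frac{2n+x}{2n+1+x}\right)^{u_n}$ (limit of partial products; it converges and is positive). *)

theory Defs
  imports "HOL-Analysis.Analysis"
begin

fun bin_digit_sum :: "nat \<Rightarrow> nat" where
  "bin_digit_sum n = (if n = 0 then 0 else n mod 2 + bin_digit_sum (n div 2))"

definition thue_morse :: "nat \<Rightarrow> int" where
  "thue_morse n = (-1) ^ bin_digit_sum n"

definition h_tm :: "real \<Rightarrow> real" where
  "h_tm x = lim (\<lambda>N. \<Prod>n=1..N. ((2 * real n + x) / (2 * real n + 1 + x)) powi thue_morse n)"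

definition smooth_on_real :: "real set \<Rightarrow> (real \<Rightarrow> real) \<Rightarrow> bool" where
  "smooth_on_real S f \<longleftrightarrow>
     (\<exists>F :: nat \<Rightarrow> real \<Rightarrow> real. F 0 = f \<and>
        (\<forall>k. \<forall>x\<in>S. (F k has_real_derivative F (Suc k) x) (at x)))"

end

theory Submission
  imports Defs "HOL-Complex_Analysis.Complex_Analysis" "HOL-Real_Asymp.Real_Asymp"
begin

declare bin_digit_sum.simps[simp del]

lemma bds0[simp]: "bin_digit_sum 0 = 0"
  by (subst bin_digit_sum.simps) simp

lemma bds_double: "bin_digit_sum (2*m) = bin_digit_sum m"
  by (subst bin_digit_sum.simps) (cases "m = 0", simp_all)

lemma bds_double1: "bin_digit_sum (Suc (2*m)) = Suc (bin_digit_sum m)"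
  by (subst bin_digit_sum.simps) simp

lemma tm_double: "thue_morse (2*m) = thue_morse m"
  unfolding thue_morse_def by (simp add: bds_double)

lemma tm_double1: "thue_morse (2*m+1) = - thue_morse m"
  unfolding thue_morse_def by (simp add: bds_double1)

lemma tm_cases: "thue_morse n = 1 \<or> thue_morse n = -1"
  unfolding thue_morse_def by (cases "even (bin_digit_sum n)") auto

lemma tm_one: "thue_morse 1 = -1"
  using tm_double1[of 0] by (simp add: thue_morse_def)

definition Rf :: "nat \<Rightarrow> 'a::real_normed_field \<Rightarrow> 'a" where
  "Rf m z = ((4 * of_nat m + z)*(4 * of_nat m+3+z))/((4 * of_nat m+1+z)*(4 * of_nat m+2+z))"

definition cf :: "nat \<Rightarrow> 'a::real_normed_field \<Rightarrow> 'a" where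
  "cf m z = (if thue_morse m = 1 then Rf m z else inverse (Rf m z))"

lemma cf_of_real: "cf m (of_real x) = of_real (cf m x)"
  unfolding cf_def Rf_def by simp

definition gr :: "nat \<Rightarrow> real \<Rightarrow> real" where
  "gr n x = ((2 * real n + x) / (2 * real n + 1 + x)) powi thue_morse n"

lemma gr_alt: "gr n x = (if thue_morse n = 1 then (2 * real n + x) / (2 * real n + 1 + x)
   else (2 * real n + 1 + x) / (2 * real n + x))"
  using tm_cases[of n] unfolding gr_def by (auto simp: power_int_minus)

lemma Pr_odd: "(\<Prod>n=1..2*M+1. gr n x) = (3+x)/(2+x) * (\<Prod>n<M. cf (Suc n) x)"
proof (induction M)
  case 0
  show ?case using tm_one by (simp add: gr_alt)
next
  case (Suc M)
  have e: "2 * Suc M + 1 = Suc (Suc (2*M+1))" by simp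
  have a: "gr (2*M+2) x * gr (2*M+3) x = cf (Suc M) x"
  proof -
    have t1: "thue_morse (2*M+2) = thue_morse (Suc M)" using tm_double[of "Suc M"] by simp
    have e3: "2*M+3 = 2*Suc M + 1" by simp
    have t2: "thue_morse (2*M+3) = - thue_morse (Suc M)" unfolding e3 by (rule tm_double1)
    have r1: "2 * real (2*M+2) = 4 * real (Suc M)" "2 * real (2*M+3) = 4 * real (Suc M) + 2" by simp_all
    have q: "(4 * real (Suc M) + 2 + 1 + x) = 4 * real (Suc M) + 3 + x" by simp
    show ?thesis using tm_cases[of "Suc M"]
      unfolding gr_alt cf_def Rf_def t1 t2 r1
      by (auto simp: q times_divide_times_eq add_ac)
  qed
  have s: "{1..2*Suc M+1} = insert (2*M+3) (insert (2*M+2) {1..2*M+1})" by auto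
  have "(\<Prod>n=1..2*Suc M+1. gr n x) = gr (2*M+3) x * (gr (2*M+2) x * (\<Prod>n=1..2*M+1. gr n x))"
    unfolding s by (subst prod.insert, simp, simp)+ (rule refl)
  also have "\<dots> = (3+x)/(2+x) * ((\<Prod>n<M. cf (Suc n) x) * cf (Suc M) x)"
    unfolding Suc.IH a[symmetric] by (simp add: ac_simps)
  finally show ?case by simp
qed


lemma nz4:
  fixes z :: complex and k :: real
  assumes "Re z > -2" "m \<ge> 1" "k \<ge> 0"
  shows "4 * of_nat m + of_real k + z \<noteq> 0" and "norm (4 * of_nat m + of_real k + z) \<ge> 2 * real m"
proof -
  have "Re (4 * of_nat m + of_real k + z) \<ge> 2 * real m"
    using assms by simp
  moreover have "Re (4 * of_nat m + of_real k + z) \<le> norm (4 * of_nat m + of_real k + z)"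
    by (rule complex_Re_le_cmod)
  ultimately show "norm (4 * of_nat m + of_real k + z) \<ge> 2 * real m" by linarith
  then show "4 * of_nat m + of_real k + z \<noteq> 0" using assms by auto
qed

lemma nzs:
  fixes z :: complex
  assumes "Re z > -2" "m \<ge> 1"
  defines "w \<equiv> 4 * of_nat m + z"
  shows "w \<noteq> 0" "w + 1 \<noteq> 0" "w + 2 \<noteq> 0" "w + 3 \<noteq> 0"
        "norm w \<ge> 2 * real m" "norm (w + 1) \<ge> 2 * real m"
        "norm (w + 2) \<ge> 2 * real m" "norm (w + 3) \<ge> 2 * real m"
  using nz4[OF assms(1,2), of 0] nz4[OF assms(1,2), of 1] nz4[OF assms(1,2), of 2] nz4[OF assms(1,2), of 3]
  unfolding w_def by (simp_all add: add_ac)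

lemma Rf_w: "Rf m z = (w*(w+3))/((w+1)*(w+2))" if "w = 4 * of_nat m + z"
  unfolding Rf_def that by (simp add: add_ac)

lemma alg1:
  fixes w :: complex
  assumes "w+1 \<noteq> 0" "w+2 \<noteq> 0"
  shows "(w*(w+3))/((w+1)*(w+2)) - 1 = - (2/((w+1)*(w+2)))"
proof -
  have D: "(w+1)*(w+2) \<noteq> 0" using assms by (metis mult_eq_0_iff)
  have "(w*(w+3))/((w+1)*(w+2)) - 1 = (w*(w+3) - (w+1)*(w+2))/((w+1)*(w+2))"
    by (simp only: diff_divide_distrib divide_self[OF D])
  also have "w*(w+3) - (w+1)*(w+2) = -2" by (simp add: algebra_simps)
  finally show ?thesis by (metis minus_divide_left)
qed

lemma alg2:
  fixes w :: complex
  assumes "w \<noteq> 0" "w+3 \<noteq> 0"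
  shows "inverse ((w*(w+3))/((w+1)*(w+2))) - 1 = 2/(w*(w+3))"
proof -
  have D: "w*(w+3) \<noteq> 0" using assms by (metis mult_eq_0_iff)
  have "inverse ((w*(w+3))/((w+1)*(w+2))) - 1 = ((w+1)*(w+2))/(w*(w+3)) - 1" by simp
  also have "\<dots> = ((w+1)*(w+2) - w*(w+3))/(w*(w+3))"
    by (simp only: diff_divide_distrib divide_self[OF D])
  also have "(w+1)*(w+2) - w*(w+3) = 2" by (simp add: algebra_simps)
  finally show ?thesis .
qed

lemma frac_bound:
  fixes p q :: complex and M :: real
  assumes "norm p \<ge> 2*M" "norm q \<ge> 2*M" "M \<ge> 1"
  shows "norm (2 / (p*q)) \<le> 1 / M^2"
proof -
  have "norm (2 / (p*q)) = 2 / (norm p * norm q)" by (simp add: norm_divide norm_mult)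
  also have "\<dots> \<le> 2 / ((2*M)*(2*M))"
  proof (rule divide_left_mono)
    show "(2*M)*(2*M) \<le> norm p * norm q" using assms by (intro mult_mono) auto
    show "0 < norm p * norm q * ((2*M)*(2*M))" using assms by (intro mult_pos_pos) auto
  qed simp
  also have "\<dots> = 1 / (2 * M^2)" by (simp add: power2_eq_square)
  also have "\<dots> \<le> 1 / M^2" using assms by (intro divide_left_mono) auto
  finally show ?thesis .
qed

lemma cf_bound:
  fixes z :: complex
  assumes "Re z > -2" "m \<ge> 1"
  shows "norm (cf m z - 1) \<le> 1 / (real m)^2"
proof -
  define w where "w = 4 * of_nat m + z"
  note nz = nzs[OF assms, folded w_def]
  have M: "real m \<ge> 1" using assms by simp
  show ?thesis
  proof (cases "thue_morse m = 1")
    case True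
    then have "cf m z - 1 = - (2/((w+1)*(w+2)))"
      unfolding cf_def Rf_w[OF w_def] using alg1 nz by simp
    then show ?thesis using frac_bound[OF nz(6,7) M] by simp
  next
    case False
    then have "cf m z - 1 = 2/(w*(w+3))"
      unfolding cf_def Rf_w[OF w_def] using alg2 nz by simp
    then show ?thesis using frac_bound[OF nz(5,8) M] by simp
  qed
qed

definition S2 :: "complex set" where "S2 = {z. Re z > -2}"

lemma open_S2: "open S2" unfolding S2_def by (rule open_halfspace_Re_gt)

lemma cf_holo: assumes "m \<ge> 1" shows "cf m holomorphic_on S2"
proof (cases "thue_morse m = 1")
  case True
  then show ?thesis unfolding cf_def Rf_def S2_def using nzs[OF _ assms]
    by (auto intro!: holomorphic_intros simp: add_ac)
next
  case False
  then show ?thesis unfolding cf_def Rf_def S2_def using nzs[OF _ assms]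
    by (auto intro!: holomorphic_intros simp: add_ac)
qed

definition Pc :: "nat \<Rightarrow> complex \<Rightarrow> complex" where
  "Pc N z = (\<Prod>n<N. cf (Suc n) z)"

definition G :: "complex \<Rightarrow> complex" where
  "G z = lim (\<lambda>N. Pc N z)"

lemma Pc_holo: "Pc N holomorphic_on S2"
  unfolding Pc_def by (intro holomorphic_on_prod cf_holo) auto

lemma summ: "summable (\<lambda>n. 1 / (real (Suc n))^2)"
proof -
  have "summable (\<lambda>n. inverse (real n ^ 2))" by (rule inverse_power_summable) auto
  then have "summable (\<lambda>n. inverse (real (Suc n) ^ 2))" by (subst summable_Suc_iff)
  then show ?thesis by (simp add: inverse_eq_divide)
qed

lemma unif:
  assumes "w \<in> S2"
  shows "\<exists>d>0. cball w d \<subseteq> S2 \<and> uniform_limit (cball w d) Pc G sequentially"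
proof -
  define d where "d = (Re w + 2) / 2"
  have d: "d > 0" using assms by (simp add: d_def S2_def)
  have sub: "cball w d \<subseteq> S2"
  proof
    fix z assume "z \<in> cball w d"
    then have "norm (w - z) \<le> d" by (simp add: dist_norm)
    moreover have "\<bar>Re (w - z)\<bar> \<le> norm (w - z)" by (rule abs_Re_le_cmod)
    ultimately show "z \<in> S2" using d unfolding d_def S2_def by auto
  qed
  have "uniformly_convergent_on (cball w d) (\<lambda>N z. \<Prod>n<N. cf (Suc n) z)"
  proof (rule uniformly_convergent_on_prod')
    show "continuous_on (cball w d) (cf (Suc n))" for n
      using holomorphic_on_imp_continuous_on[OF cf_holo[of "Suc n"]] sub
      by (auto intro: continuous_on_subset)
    show "compact (cball w d)" by simp
    show "uniformly_convergent_on (cball w d) (\<lambda>N x. \<Sum>n<N. norm (cf (Suc n) x - 1))"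
    proof (rule Weierstrass_m_test'[OF _ summ])
      fix n x assume "x \<in> cball w d"
      then have "Re x > -2" using sub by (auto simp: S2_def)
      then show "norm (norm (cf (Suc n) x - 1)) \<le> 1 / (real (Suc n))^2"
        using cf_bound[of x "Suc n"] by simp
    qed
  qed
  then obtain l where l: "uniform_limit (cball w d) (\<lambda>N z. \<Prod>n<N. cf (Suc n) z) l sequentially"
    by (auto simp: uniformly_convergent_on_def)
  have "uniform_limit (cball w d) Pc G sequentially"
  proof (subst uniform_limit_cong')
    show "uniform_limit (cball w d) (\<lambda>N z. \<Prod>n<N. cf (Suc n) z) l sequentially" by (rule l)
    show "Pc N z = (\<Prod>n<N. cf (Suc n) z)" for N z by (simp add: Pc_def)
    fix z assume z: "z \<in> cball w d"
    have "(\<lambda>N. Pc N z) \<longlonglongrightarrow> l z"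
      using tendsto_uniform_limitI[OF l z] by (simp add: Pc_def)
    then show "G z = l z" unfolding G_def by (rule limI)
  qed
  then show ?thesis using d sub by blast
qed

lemma G_holo: "G holomorphic_on S2"
  by (rule holomorphic_uniform_sequence[OF open_S2 Pc_holo unif])

definition FF :: "complex \<Rightarrow> complex" where
  "FF z = (3 + z) / (2 + z) * G z"

lemma FF_holo: "FF holomorphic_on S2"
proof -
  have nz: "2 + z \<noteq> 0" if "z \<in> S2" for z
  proof
    assume "2 + z = 0"
    then have "Re (2 + z) = 0" by (simp only: zero_complex.sel)
    with that show False by (simp add: S2_def)
  qed
  have "(\<lambda>z. (3 + z) / (2 + z)) holomorphic_on S2"
    by (intro holomorphic_intros) (use nz in auto)
  then show ?thesis unfolding FF_def by (rule holomorphic_on_mult[OF _ G_holo])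
qed

lemma G_lim: assumes "w \<in> S2" shows "(\<lambda>N. Pc N w) \<longlonglongrightarrow> G w"
proof -
  obtain d where "d > 0" "uniform_limit (cball w d) Pc G sequentially"
    using unif[OF assms] by blast
  then show ?thesis using tendsto_uniform_limitI centre_in_cball by (metis less_imp_le)
qed

lemma seq_even_odd:
  fixes X :: "nat \<Rightarrow> real"
  assumes e: "(\<lambda>n. X (2*n)) \<longlonglongrightarrow> L" and o: "(\<lambda>n. X (2*n+1)) \<longlonglongrightarrow> L"
  shows "X \<longlonglongrightarrow> L"
  unfolding lim_sequentially
proof (intro allI impI)
  fix r :: real assume r: "r > 0"
  obtain N1 where N1: "\<And>n. n \<ge> N1 \<Longrightarrow> dist (X (2*n)) L < r"
    using e r unfolding lim_sequentially by blast
  obtain N2 where N2: "\<And>n. n \<ge> N2 \<Longrightarrow> dist (X (2*n+1)) L < r"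
    using o r unfolding lim_sequentially by blast
  show "\<exists>no. \<forall>n\<ge>no. dist (X n) L < r"
  proof (intro exI allI impI)
    fix n assume n: "n \<ge> 2*(N1+N2)"
    show "dist (X n) L < r"
    proof (cases "even n")
      case True
      then obtain k where k: "n = 2*k" by blast
      then show ?thesis using N1[of k] n by simp
    next
      case False
      then obtain k where k: "n = 2*k+1" using oddE by blast
      then show ?thesis using N2[of k] n by simp
    qed
  qed
qed

lemma gr_lim: assumes "x > -2" shows "(\<lambda>M. gr (2*M+2) x) \<longlonglongrightarrow> 1"
proof -
  have "(\<lambda>M. gr (2*M+2) x - 1) \<longlonglongrightarrow> 0"
  proof (rule Lim_null_comparison)
    show "\<forall>\<^sub>F M in sequentially. norm (gr (2*M+2) x - 1) \<le> 1 / (4 * real M + 4 + x)"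
    proof (intro always_eventually allI)
      fix M :: nat
      have p: "4 * real M + 4 + x > 0" using assms by linarith
      define A where "A = 4 * real M + 4 + x"
      have e1: "2 * real (2*M+2) + x = A" "2 * real (2*M+2) + 1 + x = A + 1" by (simp_all add: A_def)
      have A: "A > 0" using p by (simp add: A_def)
      have b1: "\<bar>A/(A+1) - 1\<bar> \<le> 1/A"
      proof -
        have "A/(A+1) - 1 = - (1/(A+1))" using A by (simp add: field_simps)
        then show ?thesis using A by (simp add: frac_le)
      qed
      have b2: "\<bar>(A+1)/A - 1\<bar> \<le> 1/A"
      proof -
        have "(A+1)/A - 1 = 1/A" using A by (simp add: field_simps)
        then show ?thesis using A by simp
      qed
      show "norm (gr (2*M+2) x - 1) \<le> 1 / (4 * real M + 4 + x)"
        unfolding gr_alt e1 A_def[symmetric] using b1 b2 by auto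
    qed
    show "(\<lambda>M. 1 / (4 * real M + 4 + x)) \<longlonglongrightarrow> 0" by real_asymp
  qed
  then have "(\<lambda>M. (gr (2*M+2) x - 1) + 1) \<longlonglongrightarrow> 0 + 1" by (intro tendsto_intros)
  then show ?thesis by simp
qed

lemma h_eq:
  assumes "x > -2"
  shows "h_tm x = Re (FF (of_real x))"
proof -
  have w: "of_real x \<in> S2" using assms by (simp add: S2_def)
  have "(\<lambda>N. Pc N (of_real x)) \<longlonglongrightarrow> G (of_real x)" by (rule G_lim[OF w])
  then have "(\<lambda>N. Re (Pc N (of_real x))) \<longlonglongrightarrow> Re (G (of_real x))"
    by (rule tendsto_Re)
  moreover have "Re (Pc N (of_real x)) = (\<Prod>n<N. cf (Suc n) x)" for N
    by (simp only: Pc_def cf_of_real of_real_prod[symmetric] Re_complex_of_real)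
  ultimately have q: "(\<lambda>N. \<Prod>n<N. cf (Suc n) x) \<longlonglongrightarrow> Re (G (of_real x))" by simp
  define L where "L = (3+x)/(2+x) * Re (G (of_real x))"
  define X where "X = (\<lambda>N. \<Prod>n=1..N. gr n x)"
  have odd: "(\<lambda>M. X (2*M+1)) \<longlonglongrightarrow> L"
    unfolding X_def Pr_odd L_def by (intro tendsto_intros q)
  have "(\<lambda>M. X (2*M+1) * gr (2*M+2) x) \<longlonglongrightarrow> L * 1"
    by (intro tendsto_intros odd gr_lim assms)
  moreover have "X (2*M+1) * gr (2*M+2) x = X (2*(Suc M))" for M
    unfolding X_def by (simp add: prod.cl_ivl_Suc)
  ultimately have "(\<lambda>M. X (2*(Suc M))) \<longlonglongrightarrow> L" by simp
  then have even: "(\<lambda>M. X (2*M)) \<longlonglongrightarrow> L" by (rule LIMSEQ_imp_Suc)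
  have "X \<longlonglongrightarrow> L" by (rule seq_even_odd[OF even odd])
  moreover have "h_tm x = lim X" unfolding h_tm_def X_def gr_def by simp
  ultimately have "h_tm x = L" by (simp add: limI)
  also have "L = Re (FF (of_real x))"
  proof -
    have "(3 + complex_of_real x) / (2 + complex_of_real x) = of_real ((3+x)/(2+x))" by simp
    then show ?thesis unfolding FF_def L_def by simp
  qed
  finally show ?thesis .
qed

lemma re_deriv:
  assumes "H holomorphic_on S2" "of_real x \<in> S2"
  shows "((\<lambda>t. Re (H (of_real t))) has_real_derivative Re (deriv H (of_real x))) (at x)"
proof -
  have "(H has_field_derivative deriv H (of_real x)) (at (of_real x))"
    by (rule holomorphic_derivI[OF assms(1) open_S2 assms(2)])
  then have "((\<lambda>t. H (of_real t)) has_vector_derivative deriv H (of_real x)) (at x)"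
    by (rule has_vector_derivative_real_field)
  then show ?thesis by (rule has_field_derivative_Re)
qed

theorem theorem4:
  shows "smooth_on_real {-2<..} h_tm"
proof -
  define Fs where "Fs = (\<lambda>k::nat. if k = 0 then h_tm else (\<lambda>x. Re ((deriv ^^ k) FF (of_real x))))"
  show ?thesis
  unfolding smooth_on_real_def
proof (rule exI[of _ Fs], intro conjI allI ballI)
  show "Fs 0 = h_tm" by (simp add: Fs_def)
  fix k :: nat and x :: real assume x: "x \<in> {-2<..}"
  have xs: "of_real x \<in> S2" using x by (simp add: S2_def)
  have hk: "((\<lambda>t. Re ((deriv ^^ k) FF (of_real t))) has_real_derivative
      Re (deriv ((deriv ^^ k) FF) (of_real x))) (at x)"
    by (rule re_deriv[OF holomorphic_higher_deriv[OF FF_holo open_S2] xs])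
  show "(Fs k has_real_derivative Fs (Suc k) x) (at x)"
  proof (cases "k = 0")
    case True
    have "((\<lambda>t. Re (FF (of_real t))) has_real_derivative Fs (Suc k) x) (at x)"
      using hk True by (simp add: Fs_def)
    then show ?thesis
      by (rule has_field_derivative_transform_within_open[where S="{-2<..}"])
         (use x True h_eq in \<open>auto simp: Fs_def\<close>)
  next
    case False
    then show ?thesis using hk by (simp add: Fs_def)
  qed
qed
qed

end
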